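(* Let $(W,S)$ be a Coxeter group, $w\in W$, and let $s,t$ be two distinct elements of $T=\bigcup_{x\in W}xSx^{-1}$ such that $st$ has finite order $m_{s,t}$. Let $\vec a$ be a reduced expression for $w$. Then: (a) The word $\rho_{s,t}$ appears as a subword of $\operatorname{Invs}\vec a$ at most one time (i.e., in at most one set of positions). (b) The words $\rho_{s,t}$ and $\rho_{t,s}$ cannot both appear as subwords of $\operatorname{Invs}\vec a$.
   Context: $(W,S)$ is a Coxeter group. A reduced expression for $w$ is a tuple $(a_1,\ldots,a_k)\in S^k$ with $w=a_1\cdots a_k$ and $k$ minimal. $\operatorname{Invs}(a_1,\ldots,a_k)=(t_1,\ldots,t_k)$ with $t_i=(a_1\cdots a_{i-1})a_i(a_1\cdots a_{i-1})^{-1}$. For distinct $s,t\in T$ with $m_{s,t}<\infty$, $\rho_{s,t}=((st)^0s,(st)^1s,\ldots,(st)^{m_{s,t}-1}s)$. A subword of $(x_1,\ldots,x_k)$ is a word $(x_{i_1},\ldots,x_{i_p})$ with $i_1<\cdots<i_p$ (not necessarily contiguous). *)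

theory Defs
  imports "HOL-Algebra.Multiplicative_Group" "HOL-Algebra.Generated_Groups"
begin

definition word_prod :: "('a, 'b) monoid_scheme \<Rightarrow> 'a list \<Rightarrow> 'a" where
  "word_prod G xs = foldr (\<lambda>x y. x \<otimes>\<^bsub>G\<^esub> y) xs \<one>\<^bsub>G\<^esub>"

definition alt_word :: "'a \<Rightarrow> 'a \<Rightarrow> nat \<Rightarrow> 'a list" where
  "alt_word s t n = map (\<lambda>i. if even i then s else t) [0..<n]"

(* one-step elementary move: delete a relator (s t)^{m(s,t)} (m finite) from a word;
   for s = t this is the deletion of s s *)
inductive cox_step :: "('a, 'b) monoid_scheme \<Rightarrow> 'a set \<Rightarrow> 'a list \<Rightarrow> 'a list \<Rightarrow> bool"
  for G S where
  "s \<in> S \<Longrightarrow> t \<in> S \<Longrightarrow> group.ord G (s \<otimes>\<^bsub>G\<^esub> t) \<noteq> 0 \<Longrightarrow>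
   cox_step G S (u @ alt_word s t (2 * group.ord G (s \<otimes>\<^bsub>G\<^esub> t)) @ v) (u @ v)"

definition cox_equiv :: "('a, 'b) monoid_scheme \<Rightarrow> 'a set \<Rightarrow> 'a list \<Rightarrow> 'a list \<Rightarrow> bool" where
  "cox_equiv G S = (\<lambda>u v. cox_step G S u v \<or> cox_step G S v u)\<^sup>*\<^sup>*"

(* (G,S) is a Coxeter system: G is generated by the set S of involutions and
   G has the presentation < S | (s t)^{m(s,t)} = 1 for m(s,t) finite >, i.e.
   two words over S have the same product iff they are related by the relations *)
definition coxeter_system :: "('a, 'b) monoid_scheme \<Rightarrow> 'a set \<Rightarrow> bool" where
  "coxeter_system G S \<longleftrightarrow> group G \<and> S \<subseteq> carrier G \<and> generate G S = carrier G \<and>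
     (\<forall>s\<in>S. s \<noteq> \<one>\<^bsub>G\<^esub> \<and> s \<otimes>\<^bsub>G\<^esub> s = \<one>\<^bsub>G\<^esub>) \<and>
     (\<forall>u v. set u \<subseteq> S \<longrightarrow> set v \<subseteq> S \<longrightarrow>
        (word_prod G u = word_prod G v \<longleftrightarrow> cox_equiv G S u v))"

definition reflections :: "('a, 'b) monoid_scheme \<Rightarrow> 'a set \<Rightarrow> 'a set" where
  "reflections G S = {x \<otimes>\<^bsub>G\<^esub> s \<otimes>\<^bsub>G\<^esub> inv\<^bsub>G\<^esub> x | x s. x \<in> carrier G \<and> s \<in> S}"

definition reduced_expr :: "('a, 'b) monoid_scheme \<Rightarrow> 'a set \<Rightarrow> 'a \<Rightarrow> 'a list \<Rightarrow> bool" where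
  "reduced_expr G S w as \<longleftrightarrow> set as \<subseteq> S \<and> word_prod G as = w \<and>
     (\<forall>bs. set bs \<subseteq> S \<longrightarrow> word_prod G bs = w \<longrightarrow> length as \<le> length bs)"

(* Invs(a_1..a_k) = (t_1..t_k), t_i = (a_1...a_{i-1}) a_i (a_1...a_{i-1})^{-1} (0-indexed here) *)
definition invs :: "('a, 'b) monoid_scheme \<Rightarrow> 'a list \<Rightarrow> 'a list" where
  "invs G as = map (\<lambda>i. word_prod G (take i as) \<otimes>\<^bsub>G\<^esub> (as ! i) \<otimes>\<^bsub>G\<^esub>
                        inv\<^bsub>G\<^esub> (word_prod G (take i as))) [0..<length as]"

definition rho :: "('a, 'b) monoid_scheme \<Rightarrow> 'a \<Rightarrow> 'a \<Rightarrow> 'a list" where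
  "rho G s t = map (\<lambda>i. ((s \<otimes>\<^bsub>G\<^esub> t) [^]\<^bsub>G\<^esub> i) \<otimes>\<^bsub>G\<^esub> s) [0..<group.ord G (s \<otimes>\<^bsub>G\<^esub> t)]"

definition subword_at :: "'a list \<Rightarrow> nat list \<Rightarrow> 'a list \<Rightarrow> bool" where
  "subword_at xs js ys \<longleftrightarrow> sorted_wrt (<) js \<and> (\<forall>j\<in>set js. j < length xs) \<and>
     map (\<lambda>j. xs ! j) js = ys"

definition is_subword :: "'a list \<Rightarrow> 'a list \<Rightarrow> bool" where
  "is_subword ys xs \<longleftrightarrow> (\<exists>js. subword_at xs js ys)"

end

theory Submission
  imports Defs
begin

context group begin

lemma wp_carrier: "set xs \<subseteq> carrier G \<Longrightarrow> word_prod G xs \<in> carrier G"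
  by (induction xs) (auto simp: word_prod_def)

lemma wp_append: "set xs \<subseteq> carrier G \<Longrightarrow> set ys \<subseteq> carrier G \<Longrightarrow>
   word_prod G (xs @ ys) = word_prod G xs \<otimes> word_prod G ys"
proof (induction xs)
  case Nil then show ?case by (simp add: word_prod_def wp_carrier[unfolded word_prod_def])
next
  case (Cons a xs)
  then show ?case
    using wp_carrier[of xs] wp_carrier[of ys] by (simp add: word_prod_def m_assoc)
qed

lemma wp_Cons: "word_prod G (a # xs) = a \<otimes> word_prod G xs"
  by (simp add: word_prod_def)

lemma wp_Nil: "word_prod G [] = \<one>"
  by (simp add: word_prod_def)

lemma key_alg:
  assumes P: "P \<in> carrier G" and a: "a \<in> carrier G" and V: "V \<in> carrier G" and b: "b \<in> carrier G"
    and aa: "a \<otimes> a = \<one>"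
    and eq: "P \<otimes> a \<otimes> inv P = (P \<otimes> a \<otimes> V) \<otimes> b \<otimes> inv (P \<otimes> a \<otimes> V)"
  shows "P \<otimes> (a \<otimes> (V \<otimes> b)) = P \<otimes> V"
proof -
  have "(P \<otimes> a \<otimes> inv P) \<otimes> (P \<otimes> a \<otimes> V) = ((P \<otimes> a \<otimes> V) \<otimes> b \<otimes> inv (P \<otimes> a \<otimes> V)) \<otimes> (P \<otimes> a \<otimes> V)"
    using eq by simp
  also have "\<dots> = (P \<otimes> a \<otimes> V) \<otimes> b"
    using P a V b by (simp add: m_assoc)
  finally have 1: "(P \<otimes> a \<otimes> inv P) \<otimes> (P \<otimes> a \<otimes> V) = P \<otimes> (a \<otimes> (V \<otimes> b))"
    using P a V b by (simp add: m_assoc)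
  have "(P \<otimes> a \<otimes> inv P) \<otimes> (P \<otimes> a \<otimes> V) = P \<otimes> (a \<otimes> a) \<otimes> V"
    using P a V by (simp add: m_assoc[symmetric]) (simp add: m_assoc)
  also have "\<dots> = P \<otimes> V" using aa P V by simp
  finally show ?thesis using 1 by simp
qed

lemma invs_distinct:
  assumes SG: "S \<subseteq> carrier G" and inv2: "\<forall>s\<in>S. s \<otimes> s = \<one>"
    and red: "reduced_expr G S w as"
  shows "distinct (invs G as)"
proof -
  have asS: "set as \<subseteq> S" and wdef: "word_prod G as = w"
    and minl: "\<And>bs. set bs \<subseteq> S \<Longrightarrow> word_prod G bs = w \<Longrightarrow> length as \<le> length bs"
    using red unfolding reduced_expr_def by auto
  show ?thesis
  proof (rule ccontr)
    assume "\<not> distinct (invs G as)"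
    then obtain i j where ij: "i < j" "j < length as" and
      eqij: "invs G as ! i = invs G as ! j"
      unfolding distinct_conv_nth invs_def
      by (auto simp: invs_def) (metis linorder_neqE_nat)
    define u where "u = take i as"
    define a where "a = as ! i"
    define v where "v = take (j - Suc i) (drop (Suc i) as)"
    define b where "b = as ! j"
    define x where "x = drop (Suc j) as"
    have decomp: "as = u @ a # v @ b # x"
    proof -
      have "as = take i as @ as ! i # drop (Suc i) as" using ij by (simp add: id_take_nth_drop)
      moreover have "drop (Suc i) as = v @ b # x"
      proof -
        have "drop (Suc i) as = take (j - Suc i) (drop (Suc i) as) @ (drop (Suc i) as) ! (j - Suc i)
              # drop (Suc (j - Suc i)) (drop (Suc i) as)"
          using ij by (intro id_take_nth_drop) simp
        then show ?thesis using ij by (simp add: v_def b_def x_def)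
      qed
      ultimately show ?thesis by (simp add: u_def a_def)
    qed
    have lu: "length u = i" using ij by (simp add: u_def)
    have lv: "length v = j - Suc i" using ij by (simp add: v_def)
    have jv: "j - i = Suc (length v)" using lv ij by simp
    have tj: "take j as = u @ a # v" using decomp lu jv ij
      by (simp add: take_append)
    have ni: "as ! i = a" and nj: "as ! j = b" by (simp_all add: a_def b_def)
    have sets: "set u \<subseteq> carrier G" "a \<in> carrier G" "set v \<subseteq> carrier G" "b \<in> carrier G"
      "set x \<subseteq> carrier G" "a \<in> S" "set u \<subseteq> S" "set v \<subseteq> S" "set x \<subseteq> S"
      using asS SG decomp by auto
    define P where "P = word_prod G u"
    define V where "V = word_prod G v"
    define X where "X = word_prod G x"
    have PVX: "P \<in> carrier G" "V \<in> carrier G" "X \<in> carrier G"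
      using sets by (simp_all add: P_def V_def X_def wp_carrier)
    have Pj: "word_prod G (take j as) = P \<otimes> a \<otimes> V"
      using sets PVX by (simp add: tj wp_append wp_Cons P_def[symmetric] V_def[symmetric] m_assoc)
    have eq: "P \<otimes> a \<otimes> inv P = (P \<otimes> a \<otimes> V) \<otimes> b \<otimes> inv (P \<otimes> a \<otimes> V)"
      using eqij ij unfolding invs_def by (simp add: u_def[symmetric] P_def[symmetric] ni nj Pj)
    have aa: "a \<otimes> a = \<one>" using inv2 sets by auto
    have k: "P \<otimes> (a \<otimes> (V \<otimes> b)) = P \<otimes> V"
      using key_alg[OF PVX(1) sets(2) PVX(2) sets(4) aa eq] .
    have "w = P \<otimes> (a \<otimes> (V \<otimes> (b \<otimes> X)))"
      using sets wdef[symmetric] by (simp add: decomp wp_append wp_Cons P_def V_def X_def)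
    also have "\<dots> = P \<otimes> (a \<otimes> (V \<otimes> b)) \<otimes> X"
      using sets PVX by (simp add: m_assoc)
    also have "\<dots> = P \<otimes> V \<otimes> X" using k by simp
    also have "\<dots> = word_prod G (u @ v @ x)"
      using sets by (simp add: wp_append P_def V_def X_def m_assoc wp_carrier)
    finally have "length as \<le> length (u @ v @ x)"
      using minl[of "u @ v @ x"] sets by auto
    then show False using decomp by simp
  qed
qed

end

lemma subword_nth:
  assumes "subword_at L js ys" "k < length ys"
  shows "length js = length ys" "js ! k < length L" "L ! (js ! k) = ys ! k"
proof -
  have m: "map (\<lambda>j. L ! j) js = ys" and b: "\<forall>j\<in>set js. j < length L"
    using assms(1) unfolding subword_at_def by blast+
  show l: "length js = length ys" using m length_map by metis
  show "js ! k < length L" using b assms(2) l by auto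
  have "map (\<lambda>j. L ! j) js ! k = L ! (js ! k)" using assms(2) l by (simp only: nth_map)
  then show "L ! (js ! k) = ys ! k" using m by simp
qed

lemma subword_less:
  assumes "subword_at L js ys" "i < j" "j < length ys"
  shows "js ! i < js ! j"
proof -
  have so: "sorted_wrt (<) js" and l: "length js = length ys"
    using assms(1) unfolding subword_at_def by (auto simp del: sorted_wrt_map)
  show ?thesis using sorted_wrt_nth_less[OF so assms(2)] assms(3) l by simp
qed

context group begin

lemma inv_invol: "s \<in> carrier G \<Longrightarrow> s \<otimes> s = \<one> \<Longrightarrow> inv s = s"
  by (simp add: inv_equality)

lemma rho_facts:
  assumes s: "s \<in> carrier G" and t: "t \<in> carrier G" and ss: "s \<otimes> s = \<one>" and tt: "t \<otimes> t = \<one>"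
    and st: "s \<noteq> t" and o: "ord (s \<otimes> t) \<noteq> 0"
  shows "length (rho G s t) = ord (s \<otimes> t)" "2 \<le> ord (s \<otimes> t)"
    "rho G s t ! 0 = s" "rho G s t ! (ord (s \<otimes> t) - 1) = t"
proof -
  define m where "m = ord (s \<otimes> t)"
  have x: "s \<otimes> t \<in> carrier G" using s t by simp
  show "length (rho G s t) = ord (s \<otimes> t)" by (simp add: rho_def)
  have "m \<noteq> 1"
  proof
    assume "m = 1"
    then have "s \<otimes> t = \<one>" using ord_eq_1[OF x] m_def by simp
    then have "inv t = s" using s t by (simp add: inv_equality)
    then show False using inv_invol[OF t tt] st by simp
  qed
  then show m2: "2 \<le> ord (s \<otimes> t)" using o m_def by linarith
  show "rho G s t ! 0 = s" using m2 s by (simp add: rho_def)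
  have "(s \<otimes> t) [^] (m - 1) \<otimes> (s \<otimes> t) = (s \<otimes> t) [^] Suc (m - 1)"
    by (simp add: nat_pow_Suc)
  also have "\<dots> = \<one>" using m2 m_def x by simp
  finally have "(s \<otimes> t) [^] (m - 1) = inv (s \<otimes> t)"
    using x by (metis inv_equality nat_pow_closed)
  also have "\<dots> = t \<otimes> s" using s t by (simp add: inv_mult_group inv_invol ss tt)
  finally have e: "(s \<otimes> t) [^] (m - 1) \<otimes> s = t"
    using s t ss by (simp add: m_assoc)
  show "rho G s t ! (ord (s \<otimes> t) - 1) = t"
    using m2 e by (simp add: rho_def m_def)
qed

end

context group begin

lemma main_lemma:
  assumes SG: "S \<subseteq> carrier G" and inv2: "\<forall>s\<in>S. s \<otimes> s = \<one>"
    and rs: "s \<in> reflections G S" and rt: "t \<in> reflections G S"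
    and "s \<noteq> t" and "ord (s \<otimes> t) \<noteq> 0" and "reduced_expr G S w as"
  shows "(\<forall>js ks. subword_at (invs G as) js (rho G s t) \<longrightarrow>
                  subword_at (invs G as) ks (rho G s t) \<longrightarrow> js = ks)
         \<and> \<not> (is_subword (rho G s t) (invs G as) \<and> is_subword (rho G t s) (invs G as))"
proof -
  have refl: "r \<in> carrier G \<and> r \<otimes> r = \<one>" if hr: "r \<in> reflections G S" for r
  proof -
    obtain x a where r: "r = x \<otimes> a \<otimes> inv x" and x: "x \<in> carrier G" and a: "a \<in> S"
      using hr unfolding reflections_def by blast
    have ac: "a \<in> carrier G" and aa: "a \<otimes> a = \<one>" using a SG inv2 by auto
    have "r \<otimes> r = x \<otimes> (a \<otimes> a) \<otimes> inv x"
      using x ac by (simp add: r m_assoc) (simp add: m_assoc[symmetric])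
    then show ?thesis using aa x ac r by simp
  qed
  have s: "s \<in> carrier G" "s \<otimes> s = \<one>" and t: "t \<in> carrier G" "t \<otimes> t = \<one>"
    using refl rs rt by auto
  define L where "L = invs G as"
  have D: "distinct L" unfolding L_def using invs_distinct[OF SG inv2 assms(7)] .
  have a: "js = ks" if j: "subword_at L js (rho G s t)" and k: "subword_at L ks (rho G s t)" for js ks
  proof (rule nth_equalityI)
    show "length js = length ks"
      using j k unfolding subword_at_def by (metis length_map)
    fix i assume "i < length js"
    then have i: "i < length (rho G s t)" using j unfolding subword_at_def by (metis length_map)
    show "js ! i = ks ! i"
      using subword_nth(3)[OF j i] subword_nth(3)[OF k i]
        nth_eq_iff_index_eq[OF D subword_nth(2)[OF j i] subword_nth(2)[OF k i]] by simp
  qed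
  have o2: "ord (t \<otimes> s) = ord (s \<otimes> t)"
  proof -
    have "t \<otimes> s = inv (s \<otimes> t)" using s t by (simp add: inv_mult_group inv_invol)
    then show ?thesis using s t by simp
  qed
  note R1 = rho_facts[OF s(1) t(1) s(2) t(2) assms(5) assms(6)]
  note R2 = rho_facts[OF t(1) s(1) t(2) s(2) assms(5)[symmetric], unfolded o2, OF assms(6)]
  have b: False if j: "subword_at L js (rho G s t)" and k: "subword_at L ks (rho G t s)" for js ks
  proof -
    define m where "m = ord (s \<otimes> t)"
    have m2: "2 \<le> m" using R1 m_def by simp
    have i0: "0 < length (rho G s t)" "m - 1 < length (rho G s t)"
      "0 < length (rho G t s)" "m - 1 < length (rho G t s)"
      using R1 R2 m2 m_def by auto
    have j1: "js ! 0 < js ! (m - 1)" using subword_less[OF j _ i0(2)] m2 by simp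
    have k1: "ks ! 0 < ks ! (m - 1)" using subword_less[OF k _ i0(4)] m2 by simp
    have r10: "rho G s t ! 0 = s" and r1m: "rho G s t ! (m - 1) = t"
      using R1 m_def by auto
    have r20: "rho G t s ! 0 = t" and r2m: "rho G t s ! (m - 1) = s"
      using R2 m_def by auto
    have "L ! (js ! 0) = L ! (ks ! (m - 1))"
      using subword_nth(3)[OF j i0(1)] subword_nth(3)[OF k i0(4)] r10 r2m by simp
    then have e1: "js ! 0 = ks ! (m - 1)"
      using nth_eq_iff_index_eq[OF D subword_nth(2)[OF j i0(1)] subword_nth(2)[OF k i0(4)]] by simp
    have "L ! (js ! (m - 1)) = L ! (ks ! 0)"
      using subword_nth(3)[OF j i0(2)] subword_nth(3)[OF k i0(3)] r1m r20 by simp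
    then have e2: "js ! (m - 1) = ks ! 0"
      using nth_eq_iff_index_eq[OF D subword_nth(2)[OF j i0(2)] subword_nth(2)[OF k i0(3)]] by simp
    show False using j1 k1 e1 e2 by simp
  qed
  have b': "\<not> (is_subword (rho G s t) L \<and> is_subword (rho G t s) L)"
    unfolding is_subword_def using b by blast
  show ?thesis
    unfolding L_def[symmetric] using a b' by blast
qed


end

theorem proposition3p7:
  fixes G :: "('a, 'b) monoid_scheme" and S :: "'a set" and w s t :: 'a and as :: "'a list"
  assumes "coxeter_system G S"
    and "w \<in> carrier G"
    and "s \<in> reflections G S" and "t \<in> reflections G S" and "s \<noteq> t"
    and "group.ord G (s \<otimes>\<^bsub>G\<^esub> t) \<noteq> 0"
    and "reduced_expr G S w as"
  shows "(\<forall>js ks. subword_at (invs G as) js (rho G s t) \<longrightarrow>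
                  subword_at (invs G as) ks (rho G s t) \<longrightarrow> js = ks)
         \<and> \<not> (is_subword (rho G s t) (invs G as) \<and> is_subword (rho G t s) (invs G as))"
proof -
  have g: "group G" and SG: "S \<subseteq> carrier G" and inv2: "\<forall>s\<in>S. s \<otimes>\<^bsub>G\<^esub> s = \<one>\<^bsub>G\<^esub>"
    using assms(1)[unfolded coxeter_system_def]
    by (meson conjunct1 conjunct2)+
  show ?thesis
    by (rule group.main_lemma[OF g SG inv2 assms(3) assms(4) assms(5) assms(6) assms(7)])
qed

end
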